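(* Let $X\in\{A_4,D_6,E_8\}$ with rank $n\in\{4,6,8\}$, and let $\alpha_1,\dots,\alpha_n$ be a basis of $\mathbb{R}^n$ equipped with an inner product $(\cdot\mid\cdot)$ such that $(\alpha_i\mid\alpha_i)=2$ and $2(\alpha_i\mid\alpha_j)/(\alpha_i\mid\alpha_i)$ is the Cartan matrix of $X$. Then there is no simply-laced affine double extension of $X$ with trivial projection kernel; that is, there do not exist vectors $\beta,\gamma\in\mathbb{R}^n=\mathrm{span}(\alpha_1,\dots,\alpha_n)$ such that the $(n+2)\times(n+2)$ matrix $C_{uv}=2(u\mid v)/(u\mid u)$, $u,v\in(\beta,\gamma,\alpha_1,\dots,\alpha_n)$, is a simply-laced Kac–Moody-type extension of the Cartan matrix of $X$ by two nodes, i.e. has all diagonal entries $2$, all off-diagonal entries in $\{0,-1\}$ (with $(\beta\mid\beta)=(\gamma\mid\gamma)=2$), and $\det C=0$.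
   Context: Dynkin labellings: $A_4$: chain $\alpha_1-\alpha_2-\alpha_3-\alpha_4$; $D_6$: chain $\alpha_1-\cdots-\alpha_5$ with $\alpha_6$ joined to $\alpha_4$; $E_8$: chain $\alpha_1-\cdots-\alpha_7$ with $\alpha_8$ joined to $\alpha_5$. The Cartan matrix of these simply-laced diagrams has diagonal entries $2$, entries $-1$ for joined nodes and $0$ otherwise. "Trivial projection kernel" means that both additional roots lie in the span of the simple roots of $X$ (so that they can be projected with the same linear projection as the roots of $X$). *)

theory Defs
  imports "HOL-Analysis.Inner_Product" "Jordan_Normal_Form.Determinant"
begin

datatype dynkin = A4 | D6 | E8

fun rank :: "dynkin \<Rightarrow> nat" where
  "rank A4 = 4" | "rank D6 = 6" | "rank E8 = 8"

fun joined :: "dynkin \<Rightarrow> nat \<Rightarrow> nat \<Rightarrow> bool" where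
  "joined A4 i j = (i \<in> {1..4} \<and> j \<in> {1..4} \<and> (i = j + 1 \<or> j = i + 1))"
| "joined D6 i j = (i \<in> {1..6} \<and> j \<in> {1..6} \<and>
      ((i \<le> 5 \<and> j \<le> 5 \<and> (i = j + 1 \<or> j = i + 1)) \<or> {i, j} = {4, 6}))"
| "joined E8 i j = (i \<in> {1..8} \<and> j \<in> {1..8} \<and>
      ((i \<le> 7 \<and> j \<le> 7 \<and> (i = j + 1 \<or> j = i + 1)) \<or> {i, j} = {5, 8}))"

definition cartan :: "dynkin \<Rightarrow> nat \<Rightarrow> nat \<Rightarrow> real" where
  "cartan X i j = (if i = j then 2 else if joined X i j then -1 else 0)"

definition ext_family :: "'a \<Rightarrow> 'a \<Rightarrow> (nat \<Rightarrow> 'a) \<Rightarrow> nat \<Rightarrow> 'a" where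
  "ext_family \<beta> \<gamma> \<alpha> k = (if k = 0 then \<beta> else if k = 1 then \<gamma> else \<alpha> (k - 1))"

definition cartan_of :: "nat \<Rightarrow> (nat \<Rightarrow> 'a::real_inner) \<Rightarrow> real mat" where
  "cartan_of N u = mat N N (\<lambda>(i, j). 2 * inner (u i) (u j) / inner (u i) (u i))"

end

theory Submission
  imports Defs
begin

lemma A4_core: fixes c d :: "nat \<Rightarrow> real"
 assumes h: "\<forall>j\<in>{1..4}. (\<Sum>i=1..4. c i * cartan A4 i j) = d j" and dd: "\<forall>j\<in>{1..4}. d j = 0 \<or> d j = -1"
 and s: "(\<Sum>i=1..4. c i * d i) = 2"
 shows "\<forall>j\<in>{1..4}. d j = (if j = 1 \<or> j = 4 then -1 else 0)"
proof -
  have sums: "(\<Sum>i=1..4. f i) = f 1 + f 2 + f 3 + f 4" for f :: "nat \<Rightarrow> real"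
    by (simp add: eval_nat_numeral)
  have E: "\<forall>j\<in>{1..4}. c 1 * cartan A4 1 j + c 2 * cartan A4 2 j + c 3 * cartan A4 3 j + c 4 * cartan A4 4 j = d j"
    using h by (simp only: sums)
  have ivl: "{1..4::nat} = {1,2,3,4}" by auto
  from E have e: "2 * c 1 + -1 * c 2 = d 1" "-1 * c 1 + 2 * c 2 + -1 * c 3 = d 2" "-1 * c 2 + 2 * c 3 + -1 * c 4 = d 3" "-1 * c 3 + 2 * c 4 = d 4"
    unfolding ivl by (simp_all add: cartan_def doubleton_eq_iff)
  have cs: "c 1 = (4/5) * d 1 + (3/5) * d 2 + (2/5) * d 3 + (1/5) * d 4" "c 2 = (3/5) * d 1 + (6/5) * d 2 + (4/5) * d 3 + (2/5) * d 4" "c 3 = (2/5) * d 1 + (4/5) * d 2 + (6/5) * d 3 + (3/5) * d 4" "c 4 = (1/5) * d 1 + (2/5) * d 2 + (3/5) * d 3 + (4/5) * d 4"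
    using e by linarith+
  have s': "c 1 * d 1 + c 2 * d 2 + c 3 * d 3 + c 4 * d 4 = 2"
    using s by (simp only: sums)
  have s2: "((4/5) * d 1 + (3/5) * d 2 + (2/5) * d 3 + (1/5) * d 4) * d 1 + ((3/5) * d 1 + (6/5) * d 2 + (4/5) * d 3 + (2/5) * d 4) * d 2 + ((2/5) * d 1 + (4/5) * d 2 + (6/5) * d 3 + (3/5) * d 4) * d 3 + ((1/5) * d 1 + (2/5) * d 2 + (3/5) * d 3 + (4/5) * d 4) * d 4 = 2"
    using s' unfolding cs .
  from dd have D: "d 1 = 0 \<or> d 1 = -1" "d 2 = 0 \<or> d 2 = -1" "d 3 = 0 \<or> d 3 = -1" "d 4 = 0 \<or> d 4 = -1" by auto
  show ?thesis unfolding ivl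
    using D s2 by (elim disjE; simp)
qed

lemma D6_core: fixes c d :: "nat \<Rightarrow> real"
 assumes h: "\<forall>j\<in>{1..6}. (\<Sum>i=1..6. c i * cartan D6 i j) = d j" and dd: "\<forall>j\<in>{1..6}. d j = 0 \<or> d j = -1"
 and s: "(\<Sum>i=1..6. c i * d i) = 2"
 shows "\<forall>j\<in>{1..6}. d j = (if j = 2 then -1 else 0)"
proof -
  have sums: "(\<Sum>i=1..6. f i) = f 1 + f 2 + f 3 + f 4 + f 5 + f 6" for f :: "nat \<Rightarrow> real"
    by (simp add: eval_nat_numeral)
  have E: "\<forall>j\<in>{1..6}. c 1 * cartan D6 1 j + c 2 * cartan D6 2 j + c 3 * cartan D6 3 j + c 4 * cartan D6 4 j + c 5 * cartan D6 5 j + c 6 * cartan D6 6 j = d j"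
    using h by (simp only: sums)
  have ivl: "{1..6::nat} = {1,2,3,4,5,6}" by auto
  from E have e: "2 * c 1 + -1 * c 2 = d 1" "-1 * c 1 + 2 * c 2 + -1 * c 3 = d 2" "-1 * c 2 + 2 * c 3 + -1 * c 4 = d 3" "-1 * c 3 + 2 * c 4 + -1 * c 5 + -1 * c 6 = d 4" "-1 * c 4 + 2 * c 5 = d 5" "-1 * c 4 + 2 * c 6 = d 6"
    unfolding ivl by (simp_all add: cartan_def doubleton_eq_iff)
  have cs: "c 1 = 1 * d 1 + 1 * d 2 + 1 * d 3 + 1 * d 4 + (1/2) * d 5 + (1/2) * d 6" "c 2 = 1 * d 1 + 2 * d 2 + 2 * d 3 + 2 * d 4 + 1 * d 5 + 1 * d 6" "c 3 = 1 * d 1 + 2 * d 2 + 3 * d 3 + 3 * d 4 + (3/2) * d 5 + (3/2) * d 6" "c 4 = 1 * d 1 + 2 * d 2 + 3 * d 3 + 4 * d 4 + 2 * d 5 + 2 * d 6" "c 5 = (1/2) * d 1 + 1 * d 2 + (3/2) * d 3 + 2 * d 4 + (3/2) * d 5 + 1 * d 6" "c 6 = (1/2) * d 1 + 1 * d 2 + (3/2) * d 3 + 2 * d 4 + 1 * d 5 + (3/2) * d 6"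
    using e by linarith+
  have s': "c 1 * d 1 + c 2 * d 2 + c 3 * d 3 + c 4 * d 4 + c 5 * d 5 + c 6 * d 6 = 2"
    using s by (simp only: sums)
  have s2: "(1 * d 1 + 1 * d 2 + 1 * d 3 + 1 * d 4 + (1/2) * d 5 + (1/2) * d 6) * d 1 + (1 * d 1 + 2 * d 2 + 2 * d 3 + 2 * d 4 + 1 * d 5 + 1 * d 6) * d 2 + (1 * d 1 + 2 * d 2 + 3 * d 3 + 3 * d 4 + (3/2) * d 5 + (3/2) * d 6) * d 3 + (1 * d 1 + 2 * d 2 + 3 * d 3 + 4 * d 4 + 2 * d 5 + 2 * d 6) * d 4 + ((1/2) * d 1 + 1 * d 2 + (3/2) * d 3 + 2 * d 4 + (3/2) * d 5 + 1 * d 6) * d 5 + ((1/2) * d 1 + 1 * d 2 + (3/2) * d 3 + 2 * d 4 + 1 * d 5 + (3/2) * d 6) * d 6 = 2"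
    using s' unfolding cs .
  from dd have D: "d 1 = 0 \<or> d 1 = -1" "d 2 = 0 \<or> d 2 = -1" "d 3 = 0 \<or> d 3 = -1" "d 4 = 0 \<or> d 4 = -1" "d 5 = 0 \<or> d 5 = -1" "d 6 = 0 \<or> d 6 = -1" by auto
  show ?thesis unfolding ivl
    using D s2 by (elim disjE; simp)
qed

lemma E8_core: fixes c d :: "nat \<Rightarrow> real"
 assumes h: "\<forall>j\<in>{1..8}. (\<Sum>i=1..8. c i * cartan E8 i j) = d j" and dd: "\<forall>j\<in>{1..8}. d j = 0 \<or> d j = -1"
 and s: "(\<Sum>i=1..8. c i * d i) = 2"
 shows "\<forall>j\<in>{1..8}. d j = (if j = 1 then -1 else 0)"
proof -
  have sums: "(\<Sum>i=1..8. f i) = f 1 + f 2 + f 3 + f 4 + f 5 + f 6 + f 7 + f 8" for f :: "nat \<Rightarrow> real"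
    by (simp add: eval_nat_numeral)
  have E: "\<forall>j\<in>{1..8}. c 1 * cartan E8 1 j + c 2 * cartan E8 2 j + c 3 * cartan E8 3 j + c 4 * cartan E8 4 j + c 5 * cartan E8 5 j + c 6 * cartan E8 6 j + c 7 * cartan E8 7 j + c 8 * cartan E8 8 j = d j"
    using h by (simp only: sums)
  have ivl: "{1..8::nat} = {1,2,3,4,5,6,7,8}" by auto
  from E have e: "2 * c 1 + -1 * c 2 = d 1" "-1 * c 1 + 2 * c 2 + -1 * c 3 = d 2" "-1 * c 2 + 2 * c 3 + -1 * c 4 = d 3" "-1 * c 3 + 2 * c 4 + -1 * c 5 = d 4" "-1 * c 4 + 2 * c 5 + -1 * c 6 + -1 * c 8 = d 5" "-1 * c 5 + 2 * c 6 + -1 * c 7 = d 6" "-1 * c 6 + 2 * c 7 = d 7" "-1 * c 5 + 2 * c 8 = d 8"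
    unfolding ivl by (simp_all add: cartan_def doubleton_eq_iff)
  have cs: "c 1 = 2 * d 1 + 3 * d 2 + 4 * d 3 + 5 * d 4 + 6 * d 5 + 4 * d 6 + 2 * d 7 + 3 * d 8" "c 2 = 3 * d 1 + 6 * d 2 + 8 * d 3 + 10 * d 4 + 12 * d 5 + 8 * d 6 + 4 * d 7 + 6 * d 8" "c 3 = 4 * d 1 + 8 * d 2 + 12 * d 3 + 15 * d 4 + 18 * d 5 + 12 * d 6 + 6 * d 7 + 9 * d 8" "c 4 = 5 * d 1 + 10 * d 2 + 15 * d 3 + 20 * d 4 + 24 * d 5 + 16 * d 6 + 8 * d 7 + 12 * d 8" "c 5 = 6 * d 1 + 12 * d 2 + 18 * d 3 + 24 * d 4 + 30 * d 5 + 20 * d 6 + 10 * d 7 + 15 * d 8" "c 6 = 4 * d 1 + 8 * d 2 + 12 * d 3 + 16 * d 4 + 20 * d 5 + 14 * d 6 + 7 * d 7 + 10 * d 8" "c 7 = 2 * d 1 + 4 * d 2 + 6 * d 3 + 8 * d 4 + 10 * d 5 + 7 * d 6 + 4 * d 7 + 5 * d 8" "c 8 = 3 * d 1 + 6 * d 2 + 9 * d 3 + 12 * d 4 + 15 * d 5 + 10 * d 6 + 5 * d 7 + 8 * d 8"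
    using e by linarith+
  have s': "c 1 * d 1 + c 2 * d 2 + c 3 * d 3 + c 4 * d 4 + c 5 * d 5 + c 6 * d 6 + c 7 * d 7 + c 8 * d 8 = 2"
    using s by (simp only: sums)
  have s2: "(2 * d 1 + 3 * d 2 + 4 * d 3 + 5 * d 4 + 6 * d 5 + 4 * d 6 + 2 * d 7 + 3 * d 8) * d 1 + (3 * d 1 + 6 * d 2 + 8 * d 3 + 10 * d 4 + 12 * d 5 + 8 * d 6 + 4 * d 7 + 6 * d 8) * d 2 + (4 * d 1 + 8 * d 2 + 12 * d 3 + 15 * d 4 + 18 * d 5 + 12 * d 6 + 6 * d 7 + 9 * d 8) * d 3 + (5 * d 1 + 10 * d 2 + 15 * d 3 + 20 * d 4 + 24 * d 5 + 16 * d 6 + 8 * d 7 + 12 * d 8) * d 4 + (6 * d 1 + 12 * d 2 + 18 * d 3 + 24 * d 4 + 30 * d 5 + 20 * d 6 + 10 * d 7 + 15 * d 8) * d 5 + (4 * d 1 + 8 * d 2 + 12 * d 3 + 16 * d 4 + 20 * d 5 + 14 * d 6 + 7 * d 7 + 10 * d 8) * d 6 + (2 * d 1 + 4 * d 2 + 6 * d 3 + 8 * d 4 + 10 * d 5 + 7 * d 6 + 4 * d 7 + 5 * d 8) * d 7 + (3 * d 1 + 6 * d 2 + 9 * d 3 + 12 * d 4 + 15 * d 5 + 10 * d 6 + 5 * d 7 + 8 * d 8) * d 8 = 2"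
    using s' unfolding cs .
  from dd have D: "d 1 = 0 \<or> d 1 = -1" "d 2 = 0 \<or> d 2 = -1" "d 3 = 0 \<or> d 3 = -1" "d 4 = 0 \<or> d 4 = -1" "d 5 = 0 \<or> d 5 = -1" "d 6 = 0 \<or> d 6 = -1" "d 7 = 0 \<or> d 7 = -1" "d 8 = 0 \<or> d 8 = -1" by auto
  show ?thesis unfolding ivl
    using D s2 by (elim disjE; simp)
qed

fun theta :: "dynkin \<Rightarrow> nat \<Rightarrow> real" where
  "theta A4 j = (if j = 1 \<or> j = 4 then -1 else 0)"
| "theta D6 j = (if j = 2 then -1 else 0)"
| "theta E8 j = (if j = 1 then -1 else 0)"

lemma gen_core: fixes c d :: "nat \<Rightarrow> real"
 assumes h: "\<forall>j\<in>{1..rank X}. (\<Sum>i=1..rank X. c i * cartan X i j) = d j"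
   and dd: "\<forall>j\<in>{1..rank X}. d j = 0 \<or> d j = -1"
   and s: "(\<Sum>i=1..rank X. c i * d i) = 2"
 shows "\<forall>j\<in>{1..rank X}. d j = theta X j"
proof (cases X)
  case A4 show ?thesis using h dd s unfolding A4 rank.simps theta.simps by (rule A4_core)
next
  case D6 show ?thesis using h dd s unfolding D6 rank.simps theta.simps by (rule D6_core)
next
  case E8 show ?thesis using h dd s unfolding E8 rank.simps theta.simps by (rule E8_core)
qed

lemma rep:
  fixes \<alpha> :: "nat \<Rightarrow> 'a::real_inner"
  assumes inj: "inj_on \<alpha> {1..n}" and sp: "span (\<alpha> ` {1..n}) = UNIV"
  shows "\<exists>c. b = (\<Sum>i=1..n. c i *\<^sub>R \<alpha> i)"
proof -
  have "b \<in> span (\<alpha> ` {1..n})" using sp by simp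
  then obtain u where u: "b = (\<Sum>v\<in>\<alpha> ` {1..n}. u v *\<^sub>R v)"
    using span_finite[of "\<alpha> ` {1..n}"] by auto
  also have "\<dots> = (\<Sum>i=1..n. u (\<alpha> i) *\<^sub>R \<alpha> i)"
    using sum.reindex[OF inj, of "\<lambda>v. u v *\<^sub>R v"] by simp
  finally show ?thesis by (rule exI[where x="\<lambda>i. u (\<alpha> i)"])
qed

theorem mainTheorem4:
  fixes X :: dynkin and \<alpha> :: "nat \<Rightarrow> 'a::real_inner"
  assumes inj: "inj_on \<alpha> {1..rank X}"
    and indep: "independent (\<alpha> ` {1..rank X})"
    and spans: "span (\<alpha> ` {1..rank X}) = UNIV"
    and cartan: "\<forall>i\<in>{1..rank X}. \<forall>j\<in>{1..rank X}.
                   2 * inner (\<alpha> i) (\<alpha> j) / inner (\<alpha> i) (\<alpha> i) = cartan X i j"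
    and norm2: "\<forall>i\<in>{1..rank X}. inner (\<alpha> i) (\<alpha> i) = 2"
  shows "\<not> (\<exists>\<beta> \<gamma> :: 'a.
            inner \<beta> \<beta> = 2 \<and> inner \<gamma> \<gamma> = 2 \<and>
            (let C = cartan_of (rank X + 2) (ext_family \<beta> \<gamma> \<alpha>) in
              (\<forall>i<rank X + 2. C $$ (i, i) = 2) \<and>
              (\<forall>i<rank X + 2. \<forall>j<rank X + 2. i \<noteq> j \<longrightarrow> C $$ (i, j) \<in> {0, -1}) \<and>
              det C = 0))"
proof
  assume "\<exists>\<beta> \<gamma> :: 'a.
            inner \<beta> \<beta> = 2 \<and> inner \<gamma> \<gamma> = 2 \<and>
            (let C = cartan_of (rank X + 2) (ext_family \<beta> \<gamma> \<alpha>) in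
              (\<forall>i<rank X + 2. C $$ (i, i) = 2) \<and>
              (\<forall>i<rank X + 2. \<forall>j<rank X + 2. i \<noteq> j \<longrightarrow> C $$ (i, j) \<in> {0, -1}) \<and>
              det C = 0)"
  then obtain \<beta> \<gamma> :: 'a where bb: "inner \<beta> \<beta> = 2" and gg: "inner \<gamma> \<gamma> = 2"
    and off: "\<forall>i<rank X + 2. \<forall>j<rank X + 2. i \<noteq> j \<longrightarrow>
        cartan_of (rank X + 2) (ext_family \<beta> \<gamma> \<alpha>) $$ (i, j) \<in> {0, -1}"
    by (auto simp: Let_def)
  define n where "n = rank X"
  have G: "inner (\<alpha> i) (\<alpha> j) = cartan X i j" if "i \<in> {1..n}" "j \<in> {1..n}" for i j
    using cartan norm2 that unfolding n_def by force
  have Cij: "cartan_of (n + 2) (ext_family \<beta> \<gamma> \<alpha>) $$ (i, j) =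
     2 * inner (ext_family \<beta> \<gamma> \<alpha> i) (ext_family \<beta> \<gamma> \<alpha> j) / inner (ext_family \<beta> \<gamma> \<alpha> i) (ext_family \<beta> \<gamma> \<alpha> i)"
    if "i < n + 2" "j < n + 2" for i j
    using that by (simp add: cartan_of_def)
  have dB: "inner \<beta> (\<alpha> j) = 0 \<or> inner \<beta> (\<alpha> j) = -1" if "j \<in> {1..n}" for j
  proof -
    have "cartan_of (n + 2) (ext_family \<beta> \<gamma> \<alpha>) $$ (0, j + 1) \<in> {0, -1}"
      using off that unfolding n_def by auto
    then show ?thesis using that Cij[of 0 "j+1"] bb by (auto simp: ext_family_def)
  qed
  have dG: "inner \<gamma> (\<alpha> j) = 0 \<or> inner \<gamma> (\<alpha> j) = -1" if "j \<in> {1..n}" for j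
  proof -
    have "cartan_of (n + 2) (ext_family \<beta> \<gamma> \<alpha>) $$ (1, j + 1) \<in> {0, -1}"
      using off that unfolding n_def by auto
    then show ?thesis using that Cij[of 1 "j+1"] gg by (auto simp: ext_family_def)
  qed
  have bg: "inner \<beta> \<gamma> = 0 \<or> inner \<beta> \<gamma> = -1"
  proof -
    have "cartan_of (n + 2) (ext_family \<beta> \<gamma> \<alpha>) $$ (0, 1) \<in> {0, -1}"
      using off unfolding n_def by auto
    then show ?thesis using Cij[of 0 1] bb by (auto simp: ext_family_def)
  qed
  obtain c where c: "\<beta> = (\<Sum>i=1..n. c i *\<^sub>R \<alpha> i)" using rep[OF inj spans] unfolding n_def by blast
  obtain e where e: "\<gamma> = (\<Sum>i=1..n. e i *\<^sub>R \<alpha> i)" using rep[OF inj spans] unfolding n_def by blast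
  have inc: "inner \<beta> x = (\<Sum>i=1..n. c i * inner (\<alpha> i) x)" for x
    unfolding c by (simp add: inner_sum_left)
  have ine: "inner \<gamma> x = (\<Sum>i=1..n. e i * inner (\<alpha> i) x)" for x
    unfolding e by (simp add: inner_sum_left)
  have hc: "\<forall>j\<in>{1..n}. (\<Sum>i=1..n. c i * cartan X i j) = inner \<beta> (\<alpha> j)"
  proof
    fix j assume j: "j \<in> {1..n}"
    have "inner \<beta> (\<alpha> j) = (\<Sum>i=1..n. c i * inner (\<alpha> i) (\<alpha> j))" by (rule inc)
    also have "\<dots> = (\<Sum>i=1..n. c i * cartan X i j)" by (rule sum.cong) (simp, metis G j)
    finally show "(\<Sum>i=1..n. c i * cartan X i j) = inner \<beta> (\<alpha> j)" by (rule sym)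
  qed
  have he: "\<forall>j\<in>{1..n}. (\<Sum>i=1..n. e i * cartan X i j) = inner \<gamma> (\<alpha> j)"
  proof
    fix j assume j: "j \<in> {1..n}"
    have "inner \<gamma> (\<alpha> j) = (\<Sum>i=1..n. e i * inner (\<alpha> i) (\<alpha> j))" by (rule ine)
    also have "\<dots> = (\<Sum>i=1..n. e i * cartan X i j)" by (rule sum.cong) (simp, metis G j)
    finally show "(\<Sum>i=1..n. e i * cartan X i j) = inner \<gamma> (\<alpha> j)" by (rule sym)
  qed
  have sc: "(\<Sum>i=1..n. c i * inner \<beta> (\<alpha> i)) = 2"
    using bb inc[of \<beta>] by (simp add: inner_commute)
  have se: "(\<Sum>i=1..n. e i * inner \<gamma> (\<alpha> i)) = 2"
    using gg ine[of \<gamma>] by (simp add: inner_commute)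
  have dB': "\<forall>j\<in>{1..n}. inner \<beta> (\<alpha> j) = 0 \<or> inner \<beta> (\<alpha> j) = -1" using dB by blast
  have dG': "\<forall>j\<in>{1..n}. inner \<gamma> (\<alpha> j) = 0 \<or> inner \<gamma> (\<alpha> j) = -1" using dG by blast
  have t1: "\<forall>j\<in>{1..n}. inner \<beta> (\<alpha> j) = theta X j"
    using gen_core[of X c "\<lambda>j. inner \<beta> (\<alpha> j)"] hc dB' sc unfolding n_def by blast
  have t2: "\<forall>j\<in>{1..n}. inner \<gamma> (\<alpha> j) = theta X j"
    using gen_core[of X e "\<lambda>j. inner \<gamma> (\<alpha> j)"] he dG' se unfolding n_def by blast
  have "inner \<beta> \<gamma> = (\<Sum>i=1..n. c i * inner (\<alpha> i) \<gamma>)" by (rule inc)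
  also have "\<dots> = (\<Sum>i=1..n. c i * inner \<beta> (\<alpha> i))"
  proof (rule sum.cong)
    fix i assume i: "i \<in> {1..n}"
    have "inner (\<alpha> i) \<gamma> = inner \<gamma> (\<alpha> i)" by (rule inner_commute)
    also have "\<dots> = inner \<beta> (\<alpha> i)" using t1 t2 i by simp
    finally show "c i * inner (\<alpha> i) \<gamma> = c i * inner \<beta> (\<alpha> i)" by simp
  qed simp
  also have "\<dots> = 2" by (rule sc)
  finally show False using bg by simp
qed

end
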